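(* Let $\Omega\subseteq\mathbb{C}$ be a domain and let $d_\Omega$ be a distance on $\Omega$ which is continuous as a function $\Omega\times\Omega\to[0,\infty)$ (with respect to the Euclidean topology) and inner. Then the topology induced by $d_\Omega$ coincides with the Euclidean topology on $\Omega$.
   Context: Fix an integer $n\ge0$. A $C^n$-path from $x$ to $y$ in $\Omega$ is a continuous map $\gamma:[0,1]\to\Omega$, $n$ times differentiable on $(0,1)$, with $\gamma(0)=x$, $\gamma(1)=y$; a piecewise $C^n$-path is a finite concatenation of such paths. For a distance $d_\Omega$ on $\Omega$ and a path $\gamma$, its length is $L_{d_\Omega}(\gamma)=\sup_\delta\sum_{j=1}^k d_\Omega(\gamma(t_{j-1}),\gamma(t_j))$, the supremum over all partitions $\delta=\{0=t_0<t_1<\dots<t_k=1\}$. The inner pseudodistance is $d_\Omega^{i}(x,y)=\inf L_{d_\Omega}(\gamma)$ over piecewise $C^n$-paths $\gamma$ from $x$ to $y$; always $d_\Omega\le d^i_\Omega$, and $d_\Omega$ is called inner if $d_\Omega=d_\Omega^i$. *)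

theory Defs
  imports "HOL-Analysis.Analysis"
begin

definition unit_partition :: "real list \<Rightarrow> bool" where
  "unit_partition ts \<longleftrightarrow> length ts \<ge> 2 \<and> sorted_wrt (<) ts \<and> hd ts = 0 \<and> last ts = 1"

definition ntimes_differentiable_01 :: "nat \<Rightarrow> (real \<Rightarrow> complex) \<Rightarrow> bool" where
  "ntimes_differentiable_01 n g \<longleftrightarrow>
     (\<exists>D :: nat \<Rightarrow> real \<Rightarrow> complex. D 0 = g \<and>
        (\<forall>k<n. \<forall>t\<in>{0<..<1}. (D k has_vector_derivative D (Suc k) t) (at t)))"

definition Cn_path :: "nat \<Rightarrow> complex set \<Rightarrow> complex \<Rightarrow> complex \<Rightarrow> (real \<Rightarrow> complex) \<Rightarrow> bool" where
  "Cn_path n \<Omega> x y g \<longleftrightarrow> continuous_on {0..1} g \<and> g ` {0..1} \<subseteq> \<Omega> \<and>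
     ntimes_differentiable_01 n g \<and> g 0 = x \<and> g 1 = y"

text \<open>Piecewise C^n-path: finite concatenation of C^n-paths, i.e. there is a partition
  of [0,1] such that each piece (affinely reparametrised to [0,1]) is a C^n-path.\<close>
definition piecewise_Cn_path :: "nat \<Rightarrow> complex set \<Rightarrow> complex \<Rightarrow> complex \<Rightarrow> (real \<Rightarrow> complex) \<Rightarrow> bool" where
  "piecewise_Cn_path n \<Omega> x y g \<longleftrightarrow> g 0 = x \<and> g 1 = y \<and>
     (\<exists>ts. unit_partition ts \<and>
        (\<forall>j < length ts - 1. Cn_path n \<Omega> (g (ts ! j)) (g (ts ! Suc j))
              (\<lambda>s. g ((1 - s) * ts ! j + s * ts ! Suc j))))"

definition path_length :: "(complex \<Rightarrow> complex \<Rightarrow> real) \<Rightarrow> (real \<Rightarrow> complex) \<Rightarrow> ereal" where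
  "path_length d g = (SUP ts \<in> {ts. unit_partition ts}.
      ereal (\<Sum>j < length ts - 1. d (g (ts ! j)) (g (ts ! Suc j))))"

definition inner_dist :: "nat \<Rightarrow> complex set \<Rightarrow> (complex \<Rightarrow> complex \<Rightarrow> real) \<Rightarrow> complex \<Rightarrow> complex \<Rightarrow> ereal" where
  "inner_dist n \<Omega> d x y = (INF g \<in> {g. piecewise_Cn_path n \<Omega> x y g}. path_length d g)"

definition is_distance_on :: "complex set \<Rightarrow> (complex \<Rightarrow> complex \<Rightarrow> real) \<Rightarrow> bool" where
  "is_distance_on \<Omega> d \<longleftrightarrow> (\<forall>x\<in>\<Omega>. \<forall>y\<in>\<Omega>. d x y \<ge> 0 \<and> (d x y = 0 \<longleftrightarrow> x = y) \<and> d x y = d y x)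
     \<and> (\<forall>x\<in>\<Omega>. \<forall>y\<in>\<Omega>. \<forall>z\<in>\<Omega>. d x z \<le> d x y + d y z)"

definition is_inner :: "nat \<Rightarrow> complex set \<Rightarrow> (complex \<Rightarrow> complex \<Rightarrow> real) \<Rightarrow> bool" where
  "is_inner n \<Omega> d \<longleftrightarrow> (\<forall>x\<in>\<Omega>. \<forall>y\<in>\<Omega>. ereal (d x y) = inner_dist n \<Omega> d x y)"

definition d_open :: "complex set \<Rightarrow> (complex \<Rightarrow> complex \<Rightarrow> real) \<Rightarrow> complex set \<Rightarrow> bool" where
  "d_open \<Omega> d U \<longleftrightarrow> U \<subseteq> \<Omega> \<and> (\<forall>x\<in>U. \<exists>r>0. {y\<in>\<Omega>. d x y < r} \<subseteq> U)"

end

theory Submission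
  imports Defs
begin

lemma discrete_crossing: "P 0 \<Longrightarrow> \<not> P N \<Longrightarrow> \<exists>j<N. P j \<and> \<not> P (Suc j)"
proof (induction N)
  case 0 then show ?case by simp
next
  case (Suc N)
  then show ?case by (cases "P N") (auto intro: less_SucI)
qed

lemma length_ge:
  assumes dd: "is_distance_on \<Omega> d" and pw: "piecewise_Cn_path n \<Omega> x y g"
    and cb: "cball x \<rho> \<subseteq> \<Omega>" and rp: "\<rho> > 0" and yO: "y \<in> \<Omega>" and yb: "y \<notin> ball x \<rho>"
  shows "\<exists>z. dist x z = \<rho> \<and> ereal (d x z) \<le> path_length d g"
proof -
  from pw obtain ts where g0: "g 0 = x" and g1: "g 1 = y" and up: "unit_partition ts"
    and pc: "\<forall>j < length ts - 1. Cn_path n \<Omega> (g (ts ! j)) (g (ts ! Suc j))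
              (\<lambda>s. g ((1 - s) * ts ! j + s * ts ! Suc j))"
    unfolding piecewise_Cn_path_def by blast
  define N where "N = length ts - 1"
  from up have len: "length ts \<ge> 2" and sw: "sorted_wrt (<) ts" and h0: "hd ts = 0" and l1: "last ts = 1"
    unfolding unit_partition_def by auto
  have ne: "ts \<noteq> []" using len by auto
  have t0: "ts ! 0 = 0" using h0 ne by (simp add: hd_conv_nth)
  have tN: "ts ! N = 1" using l1 ne by (simp add: last_conv_nth N_def)
  have "\<exists>j<N. g (ts ! j) \<in> ball x \<rho> \<and> \<not> g (ts ! Suc j) \<in> ball x \<rho>"
    by (rule discrete_crossing[where P="\<lambda>j. g (ts ! j) \<in> ball x \<rho>"])
       (use t0 tN g0 g1 yb rp in auto)
  then obtain j where jN: "j < N" and in1: "g (ts ! j) \<in> ball x \<rho>" and out1: "g (ts ! Suc j) \<notin> ball x \<rho>"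
    by blast
  define a where "a = ts ! j"
  define b where "b = ts ! Suc j"
  have ab: "a < b" unfolding a_def b_def using sorted_wrt_nth_less[OF sw, of j "Suc j"] jN N_def by auto
  have a0: "0 \<le> a"
  proof (cases "j = 0")
    case True then show ?thesis using t0 a_def by simp
  next
    case False
    then have "ts ! 0 < ts ! j" using sorted_wrt_nth_less[OF sw, of 0 j] jN N_def by auto
    then show ?thesis using t0 a_def by simp
  qed
  have b1: "b \<le> 1"
  proof (cases "Suc j = N")
    case True then show ?thesis using tN b_def by simp
  next
    case False
    then have "ts ! Suc j < ts ! N" using sorted_wrt_nth_less[OF sw, of "Suc j" N] jN N_def len by auto
    then show ?thesis using tN b_def by simp
  qed
  define h where "h = (\<lambda>s. g ((1 - s) * a + s * b))"
  have ch: "continuous_on {0..1} h" using pc jN unfolding N_def h_def a_def b_def Cn_path_def by auto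
  have "continuous_on {0..1} (\<lambda>s. dist x (h s))"
    by (intro continuous_intros ch)
  moreover have "dist x (h 0) \<le> \<rho>" using in1 unfolding h_def a_def by simp
  moreover have "\<rho> \<le> dist x (h 1)" using out1 unfolding h_def b_def by simp
  ultimately obtain s where s01: "0 \<le> s" "s \<le> 1" and hs: "dist x (h s) = \<rho>"
    using IVT'[of "\<lambda>s. dist x (h s)" 0 \<rho> 1] by auto
  define t where "t = (1 - s) * a + s * b"
  have e1: "t - a = s * (b - a)" and e2: "b - t = (1 - s) * (b - a)" unfolding t_def by (simp_all add: algebra_simps)
  have p1: "s * (b - a) \<ge> 0" and p2: "(1 - s) * (b - a) \<ge> 0" using s01 ab by auto
  have ta: "a \<le> t" using e1 p1 by linarith
  have tb: "t \<le> b" using e2 p2 by linarith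
  define z where "z = g t"
  have dz: "dist x z = \<rho>" using hs unfolding z_def h_def t_def .
  have zO: "z \<in> \<Omega>" using cb dz by auto
  have xO: "x \<in> \<Omega>" using cb rp by auto
  have tn0: "t \<noteq> 0" using dz g0 rp z_def by auto
  have "ereal (d x z) \<le> path_length d g"
  proof (cases "t = 1")
    case True
    have "unit_partition [0,1]" by (simp add: unit_partition_def)
    then have "ereal (\<Sum>j < length [0,1::real] - 1. d (g ([0,1] ! j)) (g ([0,1] ! Suc j))) \<le> path_length d g"
      unfolding path_length_def by (intro SUP_upper) auto
    then show ?thesis using True g0 g1 z_def by simp
  next
    case False
    have t01: "0 < t" "t < 1" using False tn0 ta tb a0 b1 by auto
    have "unit_partition [0,t,1]" using t01 by (simp add: unit_partition_def)
    then have "ereal (\<Sum>j < length [0,t,1] - 1. d (g ([0,t,1] ! j)) (g ([0,t,1] ! Suc j))) \<le> path_length d g"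
      unfolding path_length_def by (intro SUP_upper) auto
    moreover have "(\<Sum>j < length [0,t,1] - 1. d (g ([0,t,1] ! j)) (g ([0,t,1] ! Suc j))) = d x z + d z y"
      using g0 g1 z_def by (simp add: numeral_2_eq_2 lessThan_Suc)
    moreover have "d z y \<ge> 0" using dd zO yO unfolding is_distance_on_def by auto
    ultimately show ?thesis by (smt (verit) ereal_less_eq(3) order_trans)
  qed
  then show ?thesis using dz by blast
qed

theorem mainTheorem3:
  fixes n :: nat and \<Omega> :: "complex set" and d :: "complex \<Rightarrow> complex \<Rightarrow> real"
  assumes "open \<Omega>" and "connected \<Omega>" and "\<Omega> \<noteq> {}"
    and "is_distance_on \<Omega> d"
    and "continuous_on (\<Omega> \<times> \<Omega>) (\<lambda>(x, y). d x y)"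
    and "is_inner n \<Omega> d"
  shows "\<forall>U. d_open \<Omega> d U \<longleftrightarrow> openin (top_of_set \<Omega>) U"
proof
  fix U
  have cx: "continuous_on \<Omega> (\<lambda>y. d x y)" if "x \<in> \<Omega>" for x
  proof -
    have "continuous_on \<Omega> (\<lambda>y. (x, y))" by (intro continuous_intros)
    moreover have "(\<lambda>y. (x, y)) ` \<Omega> \<subseteq> \<Omega> \<times> \<Omega>" using that by auto
    ultimately have "continuous_on \<Omega> ((\<lambda>(x, y). d x y) \<circ> (\<lambda>y. (x, y)))"
      using continuous_on_compose continuous_on_subset assms(5) by blast
    then show ?thesis by (simp add: o_def)
  qed
  have dxx: "d x x = 0" if "x \<in> \<Omega>" for x using assms(4) that unfolding is_distance_on_def by auto
  show "d_open \<Omega> d U \<longleftrightarrow> openin (top_of_set \<Omega>) U"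
  proof
    assume H: "d_open \<Omega> d U"
    have "open U"
    proof (subst open_subopen, intro ballI)
      fix x assume xU: "x \<in> U"
      then have xO: "x \<in> \<Omega>" using H unfolding d_open_def by auto
      obtain r where r: "r > 0" "{y\<in>\<Omega>. d x y < r} \<subseteq> U" using H xU unfolding d_open_def by blast
      have "open (\<Omega> \<inter> (\<lambda>y. d x y) -` {..<r})"
        using continuous_open_preimage[OF cx[OF xO] assms(1), of "{..<r}"] by auto
      moreover have "x \<in> \<Omega> \<inter> (\<lambda>y. d x y) -` {..<r}" using xO dxx r by auto
      moreover have "\<Omega> \<inter> (\<lambda>y. d x y) -` {..<r} \<subseteq> U" using r by auto
      ultimately show "\<exists>T. open T \<and> x \<in> T \<and> T \<subseteq> U" by blast
    qed
    then show "openin (top_of_set \<Omega>) U" using H assms(1) openin_open_eq unfolding d_open_def by blast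
  next
    assume H: "openin (top_of_set \<Omega>) U"
    then have oU: "open U" and UO: "U \<subseteq> \<Omega>" using assms(1) openin_open_eq by blast+
    show "d_open \<Omega> d U" unfolding d_open_def
    proof (intro conjI UO ballI)
      fix x assume xU: "x \<in> U"
      have xO: "x \<in> \<Omega>" using xU UO by auto
      obtain e where e: "e > 0" "ball x e \<subseteq> U" using oU xU open_contains_ball by blast
      define \<rho> where "\<rho> = e / 2"
      have rp: "\<rho> > 0" using e \<rho>_def by simp
      have cbU: "cball x \<rho> \<subseteq> U" using e \<rho>_def by (auto simp: subset_iff)
      have cbO: "cball x \<rho> \<subseteq> \<Omega>" using cbU UO by auto
      have spO: "sphere x \<rho> \<subseteq> \<Omega>" using cbO by auto
      have "sphere x \<rho> \<noteq> {}" using rp by simp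
      moreover have "continuous_on (sphere x \<rho>) (\<lambda>y. d x y)" using cx[OF xO] spO continuous_on_subset by blast
      ultimately obtain z0 where z0: "z0 \<in> sphere x \<rho>" and zmin: "\<forall>y\<in>sphere x \<rho>. d x z0 \<le> d x y"
        using continuous_attains_inf[of "sphere x \<rho>" "\<lambda>y. d x y"] by auto
      have "d x z0 > 0"
      proof -
        have "z0 \<noteq> x" using z0 rp by auto
        moreover have "z0 \<in> \<Omega>" using z0 spO by auto
        ultimately show ?thesis using assms(4) xO unfolding is_distance_on_def
          by (metis order_le_less)
      qed
      moreover have "{y\<in>\<Omega>. d x y < d x z0} \<subseteq> U"
      proof
        fix y assume y: "y \<in> {y\<in>\<Omega>. d x y < d x z0}"
        show "y \<in> U"
        proof (rule ccontr)
          assume "y \<notin> U"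
          then have yb: "y \<notin> ball x \<rho>" using cbU by (meson ball_subset_cball subset_iff)
          have "ereal (d x z0) \<le> inner_dist n \<Omega> d x y"
            unfolding inner_dist_def
          proof (rule INF_greatest)
            fix g assume "g \<in> {g. piecewise_Cn_path n \<Omega> x y g}"
            then obtain z where z: "dist x z = \<rho>" "ereal (d x z) \<le> path_length d g"
              using length_ge[OF assms(4) _ cbO rp _ yb] y by auto
            have "d x z0 \<le> d x z" using zmin z by auto
            then show "ereal (d x z0) \<le> path_length d g" using z(2) by (metis ereal_less_eq(3) order_trans)
          qed
          also have "\<dots> = ereal (d x y)" using assms(6) xO y unfolding is_inner_def by auto
          finally show False using y by simp
        qed
      qed
      ultimately show "\<exists>r>0. {y\<in>\<Omega>. d x y < r} \<subseteq> U" by blast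
    qed
  qed
qed

end
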